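(* Let $d\ge 1$, $k\ge1$ and let $(\vec n)$ be a $d\times k$ matrix of nonnegative integers. If $k\le d$, then for all $0<\epsilon<L$ the modified analytic weight $\widetilde W^{k,(\vec n)}_{\epsilon<L}$ is identically zero as a distribution on $(\mathbb{C}^d)^k$; indeed the form $\left(\frac{\partial}{\partial z^k}\right)^{\vec n^k}K^{an}_\epsilon(z^1,z^k)\prod_{\alpha=1}^{k-1}\left(\frac{\partial}{\partial z^\alpha}\right)^{\vec n^\alpha}P^{an}_{\epsilon<L}(z^\alpha,z^{\alpha+1})$ vanishes identically.
   Context: On $(\mathbb{C}^d)^k$ use coordinates $z^\alpha=(z^\alpha_1,\dots,z^\alpha_d)$ and $d^dz^\alpha=dz^\alpha_1\wedge\cdots\wedge dz^\alpha_d$. Analytic heat kernel: $K^{an}_t(z,w)=(2\pi i t)^{-d}e^{-|z-w|^2/4t}\prod_{i=1}^d(d\bar z_i-d\bar w_i)$ for $t>0$. Analytic propagator: $P^{an}_{\epsilon<L}(z,w)=\int_\epsilon^L dt\,(2\pi i t)^{-d}\sum_{j=1}^d(-1)^{j-1}\frac{\bar z_j-\bar w_j}{4t}e^{-|z-w|^2/4t}\prod_{i\neq j}(d\bar z_i-d\bar w_i)$. Write $\left(\frac{\partial}{\partial z^\alpha}\right)^{\vec n^\alpha}=\prod_{i=1}^d\frac{\partial^{n^\alpha_i}}{\partial (z^\alpha_i)^{n^\alpha_i}}$. The modified analytic weight is the distribution on $\Phi\in\Omega^{0,*}_c((\mathbb{C}^d)^k)$ $$\widetilde W^{k,(\vec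 n)}_{\epsilon<L}(\Phi)=\int_{(\mathbb{C}^d)^k}\prod_{\alpha=1}^k d^dz^\alpha\,\Phi\,\left(\frac{\partial}{\partial z^k}\right)^{\vec n^k}K^{an}_\epsilon(z^1,z^k)\prod_{\alpha=1}^{k-1}\left(\frac{\partial}{\partial z^\alpha}\right)^{\vec n^\alpha}P^{an}_{\epsilon<L}(z^\alpha,z^{\alpha+1}),$$ integrating the top-degree component. *)

theory Defs
  imports "HOL-Analysis.Analysis"
begin

text \<open>Coordinates on (C^d)^k: a point is a function on index pairs (alpha, i),
  alpha in {1..k}, i in {1..d}; the value at (alpha,i) is the coordinate z^alpha_i.\<close>
type_synonym pt = "nat \<times> nat \<Rightarrow> complex"

text \<open>A (0,*)-form: for each finite set S of index pairs, the coefficient function of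
  the basis form dzbar_S = wedge of dzbar_p over p in S, taken in increasing
  lexicographic order of (alpha, i).\<close>
type_synonym form = "(nat \<times> nat) set \<Rightarrow> pt \<Rightarrow> complex"

definition lex_less :: "nat \<times> nat \<Rightarrow> nat \<times> nat \<Rightarrow> bool" where
  "lex_less p q \<longleftrightarrow> fst p < fst q \<or> (fst p = fst q \<and> snd p < snd q)"

text \<open>Number of inversions: dzbar_A wedge dzbar_B = (-1)^(inv_count A B) dzbar_(A union B)
  for disjoint A, B.\<close>
definition inv_count :: "(nat \<times> nat) set \<Rightarrow> (nat \<times> nat) set \<Rightarrow> nat" where
  "inv_count A B = card {(a, b). a \<in> A \<and> b \<in> B \<and> lex_less b a}"

definition wedge :: "form \<Rightarrow> form \<Rightarrow> form" where
  "wedge \<omega> \<eta> S z = (if finite S then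
      (\<Sum>A\<in>Pow S. (-1::complex) ^ inv_count A (S - A) * \<omega> A z * \<eta> (S - A) z) else 0)"

definition scal_form :: "(pt \<Rightarrow> complex) \<Rightarrow> form" where
  "scal_form f S z = (if S = {} then f z else 0)"

definition smul_form :: "(pt \<Rightarrow> complex) \<Rightarrow> form \<Rightarrow> form" where
  "smul_form f \<omega> S z = f z * \<omega> S z"

primrec wedge_list :: "form list \<Rightarrow> form" where
  "wedge_list [] = scal_form (\<lambda>_. 1)"
| "wedge_list (\<omega> # \<omega>s) = wedge \<omega> (wedge_list \<omega>s)"

definition dzbar :: "nat \<times> nat \<Rightarrow> form" where
  "dzbar p S z = (if S = {p} then 1 else 0)"

definition dzbar_diff :: "nat \<Rightarrow> nat \<Rightarrow> nat \<Rightarrow> form" where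
  "dzbar_diff a b i S z = dzbar (a, i) S z - dzbar (b, i) S z"

definition wirt :: "nat \<times> nat \<Rightarrow> (pt \<Rightarrow> complex) \<Rightarrow> pt \<Rightarrow> complex" where
  "wirt p f z =
     (vector_derivative (\<lambda>t::real. f (z(p := z p + of_real t))) (at 0)
      - \<i> * vector_derivative (\<lambda>t::real. f (z(p := z p + \<i> * of_real t))) (at 0)) / 2"

definition deriv_alpha :: "nat \<Rightarrow> nat \<Rightarrow> (nat \<Rightarrow> nat) \<Rightarrow> (pt \<Rightarrow> complex) \<Rightarrow> pt \<Rightarrow> complex" where
  "deriv_alpha d \<alpha> nv f = foldr (\<lambda>i g. (wirt (\<alpha>, i) ^^ nv i) g) [1..<d+1] f"

definition form_deriv :: "nat \<Rightarrow> nat \<Rightarrow> (nat \<Rightarrow> nat) \<Rightarrow> form \<Rightarrow> form" where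
  "form_deriv d \<alpha> nv \<omega> S = deriv_alpha d \<alpha> nv (\<omega> S)"

definition sqdist :: "nat \<Rightarrow> nat \<Rightarrow> nat \<Rightarrow> pt \<Rightarrow> real" where
  "sqdist d a b z = (\<Sum>i=1..d. (cmod (z (a, i) - z (b, i)))\<^sup>2)"

definition Kan :: "nat \<Rightarrow> real \<Rightarrow> nat \<Rightarrow> nat \<Rightarrow> form" where
  "Kan d t a b = smul_form
     (\<lambda>z. inverse ((2 * of_real pi * \<i> * of_real t) ^ d) * exp (- of_real (sqdist d a b z / (4 * t))))
     (wedge_list (map (dzbar_diff a b) [1..<d+1]))"

definition Pan :: "nat \<Rightarrow> real \<Rightarrow> real \<Rightarrow> nat \<Rightarrow> nat \<Rightarrow> form" where
  "Pan d \<epsilon> L a b S z = (\<Sum>j=1..d. (-1::complex) ^ (j - 1) *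
      integral {\<epsilon>..L} (\<lambda>t::real. inverse ((2 * of_real pi * \<i> * of_real t) ^ d)
          * ((cnj (z (a, j)) - cnj (z (b, j))) / (4 * of_real t))
          * exp (- of_real (sqdist d a b z / (4 * t))))
      * wedge_list (map (dzbar_diff a b) (filter (\<lambda>i. i \<noteq> j) [1..<d+1])) S z)"

text \<open>The form (d/dz^k)^(n^k) K_eps(z^1,z^k) prod_{alpha=1}^{k-1} (d/dz^alpha)^(n^alpha) P(z^alpha,z^(alpha+1)).
  n alpha i is the entry n^alpha_i of the d x k matrix.\<close>
definition W_form :: "nat \<Rightarrow> nat \<Rightarrow> real \<Rightarrow> real \<Rightarrow> (nat \<Rightarrow> nat \<Rightarrow> nat) \<Rightarrow> form" where
  "W_form d k \<epsilon> L n = wedge (form_deriv d k (n k) (Kan d \<epsilon> 1 k))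
     (wedge_list (map (\<lambda>\<alpha>. form_deriv d \<alpha> (n \<alpha>) (Pan d \<epsilon> L \<alpha> (\<alpha> + 1))) [1..<k]))"

definition index_set :: "nat \<Rightarrow> nat \<Rightarrow> (nat \<times> nat) set" where
  "index_set d k = {1..k} \<times> {1..d}"

text \<open>Modified analytic weight: integral of the top-degree component of
  prod d^dz^alpha  Phi  (form); the top-degree antiholomorphic coefficient is integrated
  against Lebesgue measure on (C^d)^k (the orientation constant relating
  d^{dk}z d^{dk}zbar to Lebesgue measure is a nonzero constant and is dropped).\<close>
definition modified_weight :: "nat \<Rightarrow> nat \<Rightarrow> real \<Rightarrow> real \<Rightarrow> (nat \<Rightarrow> nat \<Rightarrow> nat) \<Rightarrow> form \<Rightarrow> complex" where
  "modified_weight d k \<epsilon> L n \<Phi> =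
     integral\<^sup>L (PiM (index_set d k) (\<lambda>_. lborel))
       (\<lambda>z. wedge \<Phi> (W_form d k \<epsilon> L n) (index_set d k) z)"

end

theory Submission
  imports Defs
begin

definition onef :: "form \<Rightarrow> bool" where
  "onef a \<longleftrightarrow> (\<forall>T z. (\<forall>p. T \<noteq> {p}) \<longrightarrow> a T z = 0)"

definition sig :: "nat \<times> nat \<Rightarrow> (nat \<times> nat) set \<Rightarrow> nat" where
  "sig p S = card {q\<in>S. lex_less q p}"

lemma lex_less_irrefl: "\<not> lex_less p p" by (auto simp: lex_less_def)
lemma lex_less_total: "p \<noteq> q \<Longrightarrow> lex_less p q \<or> lex_less q p"
  by (cases p; cases q) (auto simp: lex_less_def)
lemma lex_less_asym: "lex_less p q \<Longrightarrow> \<not> lex_less q p"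
  by (auto simp: lex_less_def)

lemma wedge_infinite[simp]: "infinite S \<Longrightarrow> wedge \<omega> \<eta> S z = 0"
  by (simp add: wedge_def)

lemma inv_count_single: "inv_count {p} T = card {q\<in>T. lex_less q p}"
proof -
  have "{(a, b). a \<in> {p} \<and> b \<in> T \<and> lex_less b a} = (\<lambda>q. (p,q)) ` {q\<in>T. lex_less q p}"
    by auto
  moreover have "inj_on (\<lambda>q. (p,q)) {q\<in>T. lex_less q p}" by (auto simp: inj_on_def)
  ultimately show ?thesis unfolding inv_count_def by (simp add: card_image)
qed

lemma sig_remove: "sig p (S - {p}) = sig p S"
  unfolding sig_def by (rule arg_cong[where f=card]) (auto simp: lex_less_irrefl)

lemma inv_single_sig: "inv_count {p} (S - {p}) = sig p S"
  using inv_count_single[of p "S - {p}"] sig_remove[of p S] unfolding sig_def by simp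

lemma onefD: "onef a \<Longrightarrow> (\<And>p. T \<noteq> {p}) \<Longrightarrow> a T z = 0"
  unfolding onef_def by blast

lemma wedge_onef:
  assumes a: "onef a" and fin: "finite S"
  shows "wedge a \<eta> S z = (\<Sum>p\<in>S. (-1::complex) ^ sig p S * a {p} z * \<eta> (S - {p}) z)"
proof -
  have "wedge a \<eta> S z = (\<Sum>A\<in>Pow S. (-1::complex) ^ inv_count A (S - A) * a A z * \<eta> (S - A) z)"
    using fin by (simp add: wedge_def)
  also have "\<dots> = (\<Sum>A\<in>(\<lambda>p. {p}) ` S. (-1::complex) ^ inv_count A (S - A) * a A z * \<eta> (S - A) z)"
  proof (rule sum.mono_neutral_right)
    show "finite (Pow S)" using fin by simp
    show "(\<lambda>p. {p}) ` S \<subseteq> Pow S" by blast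
    show "\<forall>A\<in>Pow S - (\<lambda>p. {p}) ` S. (-1::complex) ^ inv_count A (S - A) * a A z * \<eta> (S - A) z = 0"
    proof
      fix A assume A: "A \<in> Pow S - (\<lambda>p. {p}) ` S"
      have "\<And>p. A \<noteq> {p}" using A by blast
      then have "a A z = 0" by (rule onefD[OF a])
      then show "(-1::complex) ^ inv_count A (S - A) * a A z * \<eta> (S - A) z = 0" by simp
    qed
  qed
  also have "\<dots> = (\<Sum>p\<in>S. (-1::complex) ^ inv_count {p} (S - {p}) * a {p} z * \<eta> (S - {p}) z)"
    by (subst sum.reindex) (auto simp: inj_on_def)
  also have "\<dots> = (\<Sum>p\<in>S. (-1::complex) ^ sig p S * a {p} z * \<eta> (S - {p}) z)"
    by (simp only: inv_single_sig)
  finally show ?thesis .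
qed

lemma sig_minus_less:
  assumes "finite S" "q \<in> S" "lex_less q p"
  shows "sig p S = Suc (sig p (S - {q}))"
proof -
  have "{x\<in>S. lex_less x p} = insert q {x\<in>S - {q}. lex_less x p}" using assms by auto
  then show ?thesis unfolding sig_def using assms by simp
qed

lemma sig_minus_notless:
  assumes "\<not> lex_less q p"
  shows "sig p (S - {q}) = sig p S"
  unfolding sig_def using assms by (intro arg_cong[where f=card]) auto

lemma sign_swap:
  assumes "finite S" "p \<in> S" "q \<in> S" "p \<noteq> q"
  shows "(-1::complex) ^ (sig p S + sig q (S - {p})) = - ((-1) ^ (sig q S + sig p (S - {q})))"
proof (cases "lex_less q p")
  case True
  then have "\<not> lex_less p q" by (rule lex_less_asym)
  then show ?thesis using sig_minus_less[OF assms(1,3) True] sig_minus_notless[of p q S] by (simp add: add.commute)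
next
  case False
  then have T: "lex_less p q" using lex_less_total assms(4) by blast
  show ?thesis using sig_minus_less[OF assms(1,2) T] sig_minus_notless[OF False, of S] by (simp add: add.commute)
qed

lemma sum_minus_if: "finite S \<Longrightarrow> (\<Sum>q\<in>S - {p}. g q) = (\<Sum>q\<in>S. if p = q then 0 else g q)"
  by (rule sum.mono_neutral_cong_left) auto

lemma mult_rearr: "(u::complex) * a * (v * b * w) = (u * v) * (a * b * w)"
  by (simp add: algebra_simps)

lemma wedge2:
  assumes "onef a" "onef b" and fin: "finite S"
  shows "wedge a (wedge b W) S z = (\<Sum>p\<in>S. \<Sum>q\<in>S. if p = q then 0 else
      ((-1::complex) ^ (sig p S + sig q (S - {p}))) * (a {p} z * b {q} z * W (S - {p} - {q}) z))"
proof -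
  have "wedge a (wedge b W) S z = (\<Sum>p\<in>S. (-1::complex) ^ sig p S * a {p} z *
       (\<Sum>q\<in>S - {p}. (-1::complex) ^ sig q (S - {p}) * b {q} z * W (S - {p} - {q}) z))"
    apply (subst wedge_onef[OF assms(1) fin])
    apply (rule sum.cong[OF refl])
    apply (subst wedge_onef[OF assms(2)])
    using fin by auto
  also have "\<dots> = (\<Sum>p\<in>S. \<Sum>q\<in>S - {p}. 
      ((-1::complex) ^ (sig p S + sig q (S - {p}))) * (a {p} z * b {q} z * W (S - {p} - {q}) z))"
    apply (rule sum.cong[OF refl])
    apply (subst sum_distrib_left)
    apply (rule sum.cong[OF refl])
    by (simp only: power_add mult_rearr)
  also have "\<dots> = (\<Sum>p\<in>S. \<Sum>q\<in>S. if p = q then 0 else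
      ((-1::complex) ^ (sig p S + sig q (S - {p}))) * (a {p} z * b {q} z * W (S - {p} - {q}) z))"
    by (rule sum.cong[OF refl], rule sum_minus_if[OF fin])
  finally show ?thesis .
qed

lemma wedge_swap:
  assumes "onef a" "onef b"
  shows "wedge a (wedge b W) S z = - wedge b (wedge a W) S z"
proof (cases "finite S")
  case False then show ?thesis by simp
next
  case fin: True
  have "wedge b (wedge a W) S z = (\<Sum>q\<in>S. \<Sum>p\<in>S. if q = p then 0 else
      ((-1::complex) ^ (sig q S + sig p (S - {q}))) * (b {q} z * a {p} z * W (S - {q} - {p}) z))"
    by (rule wedge2[OF assms(2,1) fin])
  also have "\<dots> = (\<Sum>p\<in>S. \<Sum>q\<in>S. if q = p then 0 else
      ((-1::complex) ^ (sig q S + sig p (S - {q}))) * (b {q} z * a {p} z * W (S - {q} - {p}) z))"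
    by (rule sum.swap)
  also have "\<dots> = - (\<Sum>p\<in>S. \<Sum>q\<in>S. if p = q then 0 else
      ((-1::complex) ^ (sig p S + sig q (S - {p}))) * (a {p} z * b {q} z * W (S - {p} - {q}) z))"
    unfolding sum_negf[symmetric]
  proof (intro sum.cong refl)
    fix p q assume "p \<in> S" "q \<in> S"
    show "(if q = p then 0 else
      ((-1::complex) ^ (sig q S + sig p (S - {q}))) * (b {q} z * a {p} z * W (S - {q} - {p}) z)) =
      - (if p = q then 0 else
      ((-1::complex) ^ (sig p S + sig q (S - {p}))) * (a {p} z * b {q} z * W (S - {p} - {q}) z))"
    proof (cases "p = q")
      case True then show ?thesis by simp
    next
      case False
      have e: "S - {q} - {p} = S - {p} - {q}" by blast
      show ?thesis using False sign_swap[OF fin \<open>p \<in> S\<close> \<open>q \<in> S\<close> False]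
        by (simp only: e if_False eq_commute[of q p]) (simp add: algebra_simps)
    qed
  qed
  finally show ?thesis using wedge2[OF assms fin] by simp
qed

lemma inv_insert:
  assumes "p \<notin> B" "finite B" "finite C"
  shows "inv_count (insert p B) C = inv_count B C + card {c\<in>C. lex_less c p}"
proof -
  have e: "{(a, b). a \<in> insert p B \<and> b \<in> C \<and> lex_less b a} =
     {(a, b). a \<in> B \<and> b \<in> C \<and> lex_less b a} \<union> (\<lambda>c. (p,c)) ` {c\<in>C. lex_less c p}"
    by auto
  have f1: "finite {(a, b). a \<in> B \<and> b \<in> C \<and> lex_less b a}"
    by (rule finite_subset[of _ "B \<times> C"]) (use assms in auto)
  have f2: "finite ((\<lambda>c. (p,c)) ` {c\<in>C. lex_less c p})" using assms by simp
  have d: "{(a, b). a \<in> B \<and> b \<in> C \<and> lex_less b a} \<inter> (\<lambda>c. (p,c)) ` {c\<in>C. lex_less c p} = {}"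
    using assms by auto
  have i: "card ((\<lambda>c. (p,c)) ` {c\<in>C. lex_less c p}) = card {c\<in>C. lex_less c p}"
    by (rule card_image) (auto simp: inj_on_def)
  show ?thesis unfolding inv_count_def e card_Un_disjoint[OF f1 f2 d] i ..
qed

lemma sig_insert_self: "sig p (insert p B) = card {x\<in>B. lex_less x p}"
  unfolding sig_def by (rule arg_cong[where f=card]) (auto simp: lex_less_irrefl)

lemma sig_split:
  assumes "B \<subseteq> S - {p}" "finite S"
  shows "sig p S = card {x\<in>B. lex_less x p} + card {c\<in>S - {p} - B. lex_less c p}"
proof -
  have "{x\<in>S. lex_less x p} = {x\<in>B. lex_less x p} \<union> {c\<in>S - {p} - B. lex_less c p}"
    using assms by (auto simp: lex_less_irrefl)
  moreover have "finite {x\<in>B. lex_less x p}" "finite {c\<in>S - {p} - B. lex_less c p}"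
    using assms by (auto intro: finite_subset)
  ultimately show ?thesis unfolding sig_def by (subst card_Un_disjoint[symmetric]) auto
qed

lemma wedge_assoc1:
  assumes a: "onef a"
  shows "wedge (wedge a \<omega>) \<eta> S z = wedge a (wedge \<omega> \<eta>) S z"
proof (cases "finite S")
  case False then show ?thesis by simp
next
  case fin: True
  have "wedge (wedge a \<omega>) \<eta> S z = (\<Sum>A\<in>Pow S. (-1::complex) ^ inv_count A (S - A) *
      (\<Sum>p\<in>A. (-1::complex) ^ sig p A * a {p} z * \<omega> (A - {p}) z) * \<eta> (S - A) z)"
    unfolding wedge_def[of "wedge a \<omega>"] using fin
    by (simp add: wedge_onef[OF a] finite_subset)
  also have "\<dots> = (\<Sum>A\<in>Pow S. \<Sum>p\<in>{p\<in>S. p \<in> A}. (-1::complex) ^ (inv_count A (S - A) + sig p A) *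
      (a {p} z * \<omega> (A - {p}) z * \<eta> (S - A) z))"
  proof (rule sum.cong[OF refl])
    fix A assume "A \<in> Pow S"
    then have "{p\<in>S. p \<in> A} = A" by auto
    then show "(-1::complex) ^ inv_count A (S - A) *
      (\<Sum>p\<in>A. (-1::complex) ^ sig p A * a {p} z * \<omega> (A - {p}) z) * \<eta> (S - A) z =
      (\<Sum>p\<in>{p\<in>S. p \<in> A}. (-1::complex) ^ (inv_count A (S - A) + sig p A) *
      (a {p} z * \<omega> (A - {p}) z * \<eta> (S - A) z))"
      by (simp add: sum_distrib_left sum_distrib_right power_add mult.assoc)
  qed
  also have "\<dots> = (\<Sum>p\<in>S. \<Sum>A\<in>{A\<in>Pow S. p \<in> A}. (-1::complex) ^ (inv_count A (S - A) + sig p A) *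
      (a {p} z * \<omega> (A - {p}) z * \<eta> (S - A) z))"
    by (rule sum.swap_restrict) (use fin in auto)
  also have "\<dots> = (\<Sum>p\<in>S. \<Sum>B\<in>Pow (S - {p}). (-1::complex) ^ (sig p S + inv_count B (S - {p} - B)) *
      (a {p} z * \<omega> B z * \<eta> (S - {p} - B) z))"
  proof (rule sum.cong[OF refl])
    fix p assume p: "p \<in> S"
    have im: "{A\<in>Pow S. p \<in> A} = insert p ` Pow (S - {p})"
    proof
      show "{A\<in>Pow S. p \<in> A} \<subseteq> insert p ` Pow (S - {p})"
      proof
        fix A assume "A \<in> {A\<in>Pow S. p \<in> A}"
        then have "A = insert p (A - {p})" "A - {p} \<in> Pow (S - {p})" by auto
        then show "A \<in> insert p ` Pow (S - {p})" by (rule rev_image_eqI[rotated])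
      qed
      show "insert p ` Pow (S - {p}) \<subseteq> {A\<in>Pow S. p \<in> A}" using p by auto
    qed
    have inj: "inj_on (insert p) (Pow (S - {p}))"
    proof (rule inj_onI)
      fix X Y assume "X \<in> Pow (S - {p})" "Y \<in> Pow (S - {p})" "insert p X = insert p Y"
      then show "X = Y" by (metis Diff_insert_absorb PowD subset_Diff_insert)
    qed
    show "(\<Sum>A\<in>{A\<in>Pow S. p \<in> A}. (-1::complex) ^ (inv_count A (S - A) + sig p A) *
      (a {p} z * \<omega> (A - {p}) z * \<eta> (S - A) z)) =
      (\<Sum>B\<in>Pow (S - {p}). (-1::complex) ^ (sig p S + inv_count B (S - {p} - B)) *
      (a {p} z * \<omega> B z * \<eta> (S - {p} - B) z))"
      unfolding im sum.reindex[OF inj] o_def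
    proof (rule sum.cong[OF refl])
      fix B assume B: "B \<in> Pow (S - {p})"
      then have pB: "p \<notin> B" and Bs: "B \<subseteq> S - {p}" by auto
      have fB: "finite B" using Bs fin by (auto intro: finite_subset)
      have e1: "insert p B - {p} = B" using pB by auto
      have e2: "S - insert p B = S - {p} - B" by auto
      have "inv_count (insert p B) (S - {p} - B) + sig p (insert p B) = sig p S + inv_count B (S - {p} - B)"
        using inv_insert[OF pB fB, of "S - {p} - B"] sig_insert_self[of p B] sig_split[OF Bs fin] fin
        by simp
      then show "(-1::complex) ^ (inv_count (insert p B) (S - insert p B) + sig p (insert p B)) *
        (a {p} z * \<omega> (insert p B - {p}) z * \<eta> (S - insert p B) z) =
        (-1::complex) ^ (sig p S + inv_count B (S - {p} - B)) * (a {p} z * \<omega> B z * \<eta> (S - {p} - B) z)"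
        unfolding e1 e2 by simp
    qed
  qed
  also have "\<dots> = wedge a (wedge \<omega> \<eta>) S z"
    using fin unfolding wedge_onef[OF a fin] wedge_def[of \<omega>]
    by (simp add: sum_distrib_left power_add mult.assoc mult.left_commute)
  finally show ?thesis .
qed

lemma wedge_lin2:
  assumes "finite J"
  shows "wedge \<omega> (\<lambda>S z. \<Sum>j\<in>J. c j z * X j S z) S z = (\<Sum>j\<in>J. c j z * wedge \<omega> (X j) S z)"
proof (cases "finite S")
  case False then show ?thesis by simp
next
  case True
  have "wedge \<omega> (\<lambda>S z. \<Sum>j\<in>J. c j z * X j S z) S z =
     (\<Sum>A\<in>Pow S. \<Sum>j\<in>J. c j z * ((-1::complex) ^ inv_count A (S - A) * \<omega> A z * X j (S - A) z))"
    using True unfolding wedge_def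
    by (simp add: sum_distrib_left mult.assoc mult.left_commute)
  also have "\<dots> = (\<Sum>j\<in>J. \<Sum>A\<in>Pow S. c j z * ((-1::complex) ^ inv_count A (S - A) * \<omega> A z * X j (S - A) z))"
    by (rule sum.swap)
  also have "\<dots> = (\<Sum>j\<in>J. c j z * wedge \<omega> (X j) S z)"
    using True unfolding wedge_def by (simp add: sum_distrib_left)
  finally show ?thesis .
qed

lemma wedge_lin1:
  assumes "finite J"
  shows "wedge (\<lambda>S z. \<Sum>j\<in>J. c j z * X j S z) \<eta> S z = (\<Sum>j\<in>J. c j z * wedge (X j) \<eta> S z)"
proof (cases "finite S")
  case False then show ?thesis by simp
next
  case True
  have "wedge (\<lambda>S z. \<Sum>j\<in>J. c j z * X j S z) \<eta> S z =
     (\<Sum>A\<in>Pow S. \<Sum>j\<in>J. c j z * ((-1::complex) ^ inv_count A (S - A) * X j A z * \<eta> (S - A) z))"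
    using True unfolding wedge_def
    by (simp add: sum_distrib_left sum_distrib_right mult.assoc mult.left_commute)
  also have "\<dots> = (\<Sum>j\<in>J. \<Sum>A\<in>Pow S. c j z * ((-1::complex) ^ inv_count A (S - A) * X j A z * \<eta> (S - A) z))"
    by (rule sum.swap)
  also have "\<dots> = (\<Sum>j\<in>J. c j z * wedge (X j) \<eta> S z)"
    using True unfolding wedge_def by (simp add: sum_distrib_left)
  finally show ?thesis .
qed

lemma wedge_smul1: "wedge (\<lambda>S z. c z * X S z) \<eta> S z = c z * wedge X \<eta> S z"
  using wedge_lin1[of "{0::nat}" "\<lambda>_. c" "\<lambda>_. X" \<eta> S z] by simp

lemma wedge_neg2: "wedge \<omega> (\<lambda>S z. - X S z) S z = - wedge \<omega> X S z"
  using wedge_lin2[of "{0::nat}" \<omega> "\<lambda>_ _. -1" "\<lambda>_. X" S z] by simp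

lemma wedge_cong2:
  assumes "\<And>S z. finite S \<Longrightarrow> \<eta> S z = \<eta>' S z"
  shows "wedge \<omega> \<eta> S z = wedge \<omega> \<eta>' S z"
  unfolding wedge_def using assms by (auto intro!: sum.cong)

lemma foldr_lin2:
  assumes "finite J"
  shows "foldr wedge L (\<lambda>S z. \<Sum>j\<in>J. c j z * X j S z) S z = (\<Sum>j\<in>J. c j z * foldr wedge L (X j) S z)"
proof (induction L arbitrary: S z)
  case Nil then show ?case by simp
next
  case (Cons a L)
  have e: "foldr wedge L (\<lambda>S z. \<Sum>j\<in>J. c j z * X j S z) = (\<lambda>S z. \<Sum>j\<in>J. c j z * foldr wedge L (X j) S z)"
    using Cons by (intro ext)
  show ?case by (simp add: e wedge_lin2[OF assms])
qed

lemma foldr_cong2: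
  assumes "\<And>S z. finite S \<Longrightarrow> Y S z = Y' S z" "finite S"
  shows "foldr wedge L Y S z = foldr wedge L Y' S z"
  using assms(2)
proof (induction L arbitrary: S z)
  case Nil then show ?case using assms(1) by simp
next
  case (Cons a L)
  show ?case by (simp, rule wedge_cong2, rule Cons.IH)
qed

lemma wedge_scal1: "finite S \<Longrightarrow> wedge (scal_form (\<lambda>_. 1)) R S z = R S z"
proof -
  assume fin: "finite S"
  have "wedge (scal_form (\<lambda>_. 1)) R S z =
    (\<Sum>A\<in>Pow S. (-1::complex) ^ inv_count A (S - A) * scal_form (\<lambda>_. 1) A z * R (S - A) z)"
    using fin by (simp add: wedge_def)
  also have "\<dots> = (\<Sum>A\<in>{{}}. (-1::complex) ^ inv_count A (S - A) * scal_form (\<lambda>_. 1) A z * R (S - A) z)"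
    by (rule sum.mono_neutral_right) (use fin in \<open>auto simp: scal_form_def\<close>)
  also have "\<dots> = R S z" by (simp add: inv_count_def scal_form_def)
  finally show ?thesis .
qed

lemma wedge_list_assoc:
  assumes "\<forall>x\<in>set L. onef x" "finite S"
  shows "wedge (wedge_list L) R S z = foldr wedge L R S z"
  using assms
proof (induction L arbitrary: S z)
  case Nil then show ?case by (simp add: wedge_scal1)
next
  case (Cons a L)
  have "wedge (wedge_list (a # L)) R S z = wedge a (wedge (wedge_list L) R) S z"
    using Cons.prems by (simp add: wedge_assoc1)
  also have "\<dots> = wedge a (foldr wedge L R) S z"
    by (rule wedge_cong2) (use Cons in auto)
  finally show ?case by simp
qed

lemma foldr_swap:
  assumes "onef a" "onef b"
  shows "foldr wedge (xs @ a # b # ys) R S z = - foldr wedge (xs @ b # a # ys) R S z"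
proof (induction xs arbitrary: S z)
  case Nil then show ?case using wedge_swap[OF assms] by simp
next
  case (Cons x xs)
  have e: "foldr wedge (xs @ a # b # ys) R = (\<lambda>S z. - foldr wedge (xs @ b # a # ys) R S z)"
    using Cons by (intro ext)
  have "foldr wedge ((x # xs) @ a # b # ys) R S z = wedge x (foldr wedge (xs @ a # b # ys) R) S z" by simp
  also have "\<dots> = - wedge x (foldr wedge (xs @ b # a # ys) R) S z" unfolding e by (rule wedge_neg2)
  finally show ?case by simp
qed

lemma foldr_double:
  assumes "onef b" "\<forall>x\<in>set ys. onef x"
  shows "foldr wedge (xs @ b # ys @ b # zs) R S z = 0"
  using assms(2)
proof (induction ys arbitrary: xs S z)
  case Nil
  have "foldr wedge (xs @ b # b # zs) R S z = - foldr wedge (xs @ b # b # zs) R S z"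
    by (rule foldr_swap[OF assms(1) assms(1)])
  then show ?case by simp
next
  case (Cons y ys)
  have "foldr wedge (xs @ b # (y # ys) @ b # zs) R S z = - foldr wedge (xs @ y # b # ys @ b # zs) R S z"
    using foldr_swap[OF assms(1), of y xs "ys @ b # zs" R S z] Cons.prems by simp
  also have "foldr wedge (xs @ y # b # ys @ b # zs) R S z = foldr wedge ((xs @ [y]) @ b # ys @ b # zs) R S z"
    by simp
  also have "\<dots> = 0" using Cons.prems by (intro Cons.IH) simp
  finally show ?case by simp
qed

lemma foldr_double2:
  assumes "onef b" "\<forall>x\<in>set ys. onef x" "b \<in> set ys"
  shows "foldr wedge (xs @ b # ys) R S z = 0"
proof -
  obtain us vs where ys: "ys = us @ b # vs" using split_list[OF assms(3)] by blast
  show ?thesis unfolding ys by (rule foldr_double[OF assms(1)]) (use assms(2) ys in auto)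
qed

lemma foldr_slot:
  assumes "finite J"
  shows "foldr wedge (xs @ (\<lambda>S z. \<Sum>j\<in>J. c j z * X j S z) # ys) R S z =
    (\<Sum>j\<in>J. c j z * foldr wedge (xs @ X j # ys) R S z)"
proof (induction xs arbitrary: S z)
  case Nil then show ?case by (simp add: wedge_lin1[OF assms])
next
  case (Cons x xs)
  have e: "foldr wedge (xs @ (\<lambda>S z. \<Sum>j\<in>J. c j z * X j S z) # ys) R =
     (\<lambda>S z. \<Sum>j\<in>J. c j z * foldr wedge (xs @ X j # ys) R S z)"
    using Cons by (intro ext)
  have "foldr wedge ((x # xs) @ (\<lambda>S z. \<Sum>j\<in>J. c j z * X j S z) # ys) R S z =
     wedge x (foldr wedge (xs @ (\<lambda>S z. \<Sum>j\<in>J. c j z * X j S z) # ys) R) S z" by simp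
  also have "\<dots> = (\<Sum>j\<in>J. c j z * wedge x (foldr wedge (xs @ X j # ys) R) S z)"
    unfolding e by (rule wedge_lin2[OF assms])
  finally show ?case by simp
qed

lemma onef_dzbar_diff: "onef (dzbar_diff a b i)"
  unfolding onef_def dzbar_diff_def dzbar_def by auto

lemma telescope:
  assumes "1 \<le> k"
  shows "dzbar_diff 1 k i = (\<lambda>S z. \<Sum>\<alpha>\<in>{1..<k}. 1 * dzbar_diff \<alpha> (\<alpha> + 1) i S z)"
  using assms
proof (induction k rule: dec_induct)
  case base then show ?case by (intro ext) (simp add: dzbar_diff_def)
next
  case (step k)
  show ?case
  proof (intro ext)
    fix S z
    have h: "dzbar_diff 1 k i S z = (\<Sum>\<alpha>\<in>{1..<k}. 1 * dzbar_diff \<alpha> (\<alpha> + 1) i S z)"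
      using step.IH by simp
    have "(\<Sum>\<alpha>\<in>{1..<Suc k}. 1 * dzbar_diff \<alpha> (\<alpha> + 1) i S z) =
      (\<Sum>\<alpha>\<in>{1..<k}. 1 * dzbar_diff \<alpha> (\<alpha> + 1) i S z) + dzbar_diff k (k+1) i S z"
      using step.hyps(1) by (simp add: sum.atLeastLessThan_Suc)
    then show "dzbar_diff 1 (Suc k) i S z = (\<Sum>\<alpha>\<in>{1..<Suc k}. 1 * dzbar_diff \<alpha> (\<alpha> + 1) i S z)"
      unfolding h[symmetric] by (simp add: dzbar_diff_def)
  qed
qed

lemma claim:
  fixes DP :: "nat \<Rightarrow> form" and cP :: "nat \<Rightarrow> nat \<Rightarrow> pt \<Rightarrow> complex"
  assumes DP: "\<And>\<alpha>. DP \<alpha> = (\<lambda>S z. \<Sum>j\<in>{1..d}. cP \<alpha> j z *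
      wedge_list (map (dzbar_diff \<alpha> (\<alpha> + 1)) (filter (\<lambda>i. i \<noteq> j) [1..<d+1])) S z)"
  shows "k - m = r \<Longrightarrow> 1 \<le> m \<Longrightarrow> m \<le> k \<Longrightarrow> I \<subseteq> {1..d} \<Longrightarrow> k - m < card I \<Longrightarrow>
    (\<forall>i\<in>I. \<forall>\<alpha>\<in>{1..<m}. dzbar_diff \<alpha> (\<alpha> + 1) i \<in> set L') \<Longrightarrow> (\<forall>x\<in>set L'. onef x) \<Longrightarrow> finite S \<Longrightarrow>
    foldr wedge (map (dzbar_diff 1 k) [1..<d+1] @ L') (wedge_list (map DP [m..<k])) S z = 0"
proof (induction r arbitrary: m I L' S z)
  case 0
  then have mk: "m = k" by simp
  have "I \<noteq> {}" using 0 by auto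
  then obtain i where iI: "i \<in> I" by blast
  then have "i \<in> set [1..<d+1]" using 0 by auto
  then obtain us vs where uv: "[1..<d+1] = us @ i # vs" using split_list by metis
  have k1: "1 \<le> k" using 0 by simp
  let ?R = "wedge_list (map DP [m..<k])"
  have "foldr wedge (map (dzbar_diff 1 k) [1..<d+1] @ L') ?R S z =
    foldr wedge (map (dzbar_diff 1 k) us @ dzbar_diff 1 k i # (map (dzbar_diff 1 k) vs @ L')) ?R S z"
    unfolding uv by simp
  also have "\<dots> = foldr wedge (map (dzbar_diff 1 k) us @
      (\<lambda>S z. \<Sum>\<alpha>\<in>{1..<k}. 1 * dzbar_diff \<alpha> (\<alpha> + 1) i S z) # (map (dzbar_diff 1 k) vs @ L')) ?R S z"
    by (simp only: telescope[OF k1])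
  also have "\<dots> = (\<Sum>\<alpha>\<in>{1..<k}. 1 * foldr wedge (map (dzbar_diff 1 k) us @
      dzbar_diff \<alpha> (\<alpha> + 1) i # (map (dzbar_diff 1 k) vs @ L')) ?R S z)"
    by (rule foldr_slot) simp
  also have "\<dots> = 0"
  proof (rule sum.neutral, rule ballI)
    fix \<alpha> assume a: "\<alpha> \<in> {1..<k}"
    have "foldr wedge (map (dzbar_diff 1 k) us @
      dzbar_diff \<alpha> (\<alpha> + 1) i # (map (dzbar_diff 1 k) vs @ L')) ?R S z = 0"
    proof (rule foldr_double2)
      show "onef (dzbar_diff \<alpha> (\<alpha> + 1) i)" by (rule onef_dzbar_diff)
      show "\<forall>x\<in>set (map (dzbar_diff 1 k) vs @ L'). onef x" using 0 by (auto simp: onef_dzbar_diff)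
      show "dzbar_diff \<alpha> (\<alpha> + 1) i \<in> set (map (dzbar_diff 1 k) vs @ L')" using 0 iI a mk by auto
    qed
    then show "1 * foldr wedge (map (dzbar_diff 1 k) us @
      dzbar_diff \<alpha> (\<alpha> + 1) i # (map (dzbar_diff 1 k) vs @ L')) ?R S z = 0" by simp
  qed
  finally show ?case .
next
  case (Suc r)
  then have mk: "m < k" by simp
  let ?LL = "map (dzbar_diff 1 k) [1..<d+1] @ L'"
  let ?R' = "wedge_list (map DP [Suc m..<k])"
  define WL where "WL j = map (dzbar_diff m (m + 1)) (filter (\<lambda>i. i \<noteq> j) [1..<d+1])" for j
  have up: "[m..<k] = m # [Suc m..<k]" using mk by (simp add: upt_conv_Cons)
  have e1: "wedge_list (map DP [m..<k]) = (\<lambda>S z. \<Sum>j\<in>{1..d}. cP m j z * wedge (wedge_list (WL j)) ?R' S z)"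
    unfolding up by (intro ext) (simp add: DP[of m] WL_def wedge_lin1)
  have "foldr wedge ?LL (wedge_list (map DP [m..<k])) S z =
     (\<Sum>j\<in>{1..d}. cP m j z * foldr wedge ?LL (wedge (wedge_list (WL j)) ?R') S z)"
    unfolding e1 by (rule foldr_lin2) simp
  also have "\<dots> = 0"
  proof (rule sum.neutral, rule ballI)
    fix j assume j: "j \<in> {1..d}"
    have ow: "\<forall>x\<in>set (WL j). onef x" by (auto simp: WL_def onef_dzbar_diff)
    have "foldr wedge ?LL (wedge (wedge_list (WL j)) ?R') S z = foldr wedge ?LL (foldr wedge (WL j) ?R') S z"
      by (rule foldr_cong2[OF wedge_list_assoc[OF ow]]) (use Suc.prems in auto)
    also have "\<dots> = foldr wedge (map (dzbar_diff 1 k) [1..<d+1] @ (L' @ WL j)) (wedge_list (map DP [Suc m..<k])) S z"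
      by simp
    also have "\<dots> = 0"
    proof (rule Suc.IH)
      show "k - Suc m = r" using Suc.prems by simp
      show "1 \<le> Suc m" by simp
      show "Suc m \<le> k" using mk by simp
      show "I - {j} \<subseteq> {1..d}" using Suc.prems by auto
      have fI: "finite I" using Suc.prems(4) finite_subset by blast
      have "card I \<le> Suc (card (I - {j}))" using fI by (cases "j \<in> I") (auto simp: card_Diff_singleton_if card_gt_0_iff)
      then show "k - Suc m < card (I - {j})" using Suc.prems by simp
      show "\<forall>i\<in>I - {j}. \<forall>\<alpha>\<in>{1..<Suc m}. dzbar_diff \<alpha> (\<alpha> + 1) i \<in> set (L' @ WL j)"
      proof (intro ballI)
        fix i \<alpha> assume i: "i \<in> I - {j}" and a: "\<alpha> \<in> {1..<Suc m}"
        show "dzbar_diff \<alpha> (\<alpha> + 1) i \<in> set (L' @ WL j)"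
        proof (cases "\<alpha> < m")
          case True then show ?thesis using Suc.prems(6) i a by auto
        next
          case False then have "\<alpha> = m" using a by simp
          have "i \<in> set (filter (\<lambda>i. i \<noteq> j) [1..<d+1])" using i Suc.prems(4) by auto
          then have "dzbar_diff m (m + 1) i \<in> set (WL j)" unfolding WL_def set_map by (rule imageI)
          then show ?thesis using \<open>\<alpha> = m\<close> by simp
        qed
      qed
      show "\<forall>x\<in>set (L' @ WL j). onef x" using Suc.prems ow by auto
      show "finite S" using Suc.prems by simp
    qed
    finally show "cP m j z * foldr wedge ?LL (wedge (wedge_list (WL j)) ?R') S z = 0" by simp
  qed
  finally show ?case .
qed

inductive_set smooth :: "(nat \<Rightarrow> complex \<Rightarrow> complex) \<Rightarrow> (pt \<Rightarrow> complex) set" for \<Phi> where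
  cst: "(\<lambda>z. c) \<in> smooth \<Phi>"
| crd: "(\<lambda>z. z q) \<in> smooth \<Phi>"
| cj: "(\<lambda>z. cnj (z q)) \<in> smooth \<Phi>"
| add: "f \<in> smooth \<Phi> \<Longrightarrow> g \<in> smooth \<Phi> \<Longrightarrow> (\<lambda>z. f z + g z) \<in> smooth \<Phi>"
| mul: "f \<in> smooth \<Phi> \<Longrightarrow> g \<in> smooth \<Phi> \<Longrightarrow> (\<lambda>z. f z * g z) \<in> smooth \<Phi>"
| cmp: "f \<in> smooth \<Phi> \<Longrightarrow> (\<lambda>z. \<Phi> m (f z)) \<in> smooth \<Phi>"

lemma smooth_dir:
  assumes \<Phi>: "\<And>m w. (\<Phi> m has_field_derivative \<Phi> (Suc m) w) (at w)"
  assumes "f \<in> smooth \<Phi>"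
  shows "\<exists>f'\<in>smooth \<Phi>. \<forall>z. ((\<lambda>t::real. f (z(p := z p + v * of_real t))) has_vector_derivative f' z) (at 0)"
  using assms(2)
proof induction
  case (cst c)
  show ?case by (rule bexI[of _ "\<lambda>z. 0"]) (auto intro: smooth.cst)
next
  case (crd q)
  show ?case
  proof (cases "q = p")
    case True
    have "\<forall>z. ((\<lambda>t::real. (z(p := z p + v * of_real t)) q) has_vector_derivative v) (at 0)"
      using True by (auto intro!: derivative_eq_intros)
    then show ?thesis by (intro bexI[of _ "\<lambda>z. v"]) (auto intro: smooth.cst)
  next
    case False
    then show ?thesis by (intro bexI[of _ "\<lambda>z. 0"]) (auto intro: smooth.cst)
  qed
next
  case (cj q)
  show ?case
  proof (cases "q = p")
    case True
    have "\<forall>z. ((\<lambda>t::real. cnj ((z(p := z p + v * of_real t)) q)) has_vector_derivative cnj v) (at 0)"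
      using True by (auto intro!: derivative_eq_intros)
    then show ?thesis by (intro bexI[of _ "\<lambda>z. cnj v"]) (auto intro: smooth.cst)
  next
    case False
    then show ?thesis by (intro bexI[of _ "\<lambda>z. 0"]) (auto intro: smooth.cst)
  qed
next
  case (add f g)
  then obtain f' g' where f': "f' \<in> smooth \<Phi>" "\<forall>z. ((\<lambda>t::real. f (z(p := z p + v * of_real t))) has_vector_derivative f' z) (at 0)"
    and g': "g' \<in> smooth \<Phi>" "\<forall>z. ((\<lambda>t::real. g (z(p := z p + v * of_real t))) has_vector_derivative g' z) (at 0)"
    by blast
  have "\<forall>z. ((\<lambda>t::real. f (z(p := z p + v * of_real t)) + g (z(p := z p + v * of_real t)))
     has_vector_derivative (f' z + g' z)) (at 0)"
    using has_vector_derivative_add f'(2) g'(2) by blast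
  then show ?case
    using smooth.add[OF f'(1) g'(1)] by (rule bexI[where x="\<lambda>z. f' z + g' z"])
next
  case (mul f g)
  then obtain f' g' where f': "f' \<in> smooth \<Phi>" "\<forall>z. ((\<lambda>t::real. f (z(p := z p + v * of_real t))) has_vector_derivative f' z) (at 0)"
    and g': "g' \<in> smooth \<Phi>" "\<forall>z. ((\<lambda>t::real. g (z(p := z p + v * of_real t))) has_vector_derivative g' z) (at 0)"
    by blast
  have "\<forall>z. ((\<lambda>t::real. f (z(p := z p + v * of_real t)) * g (z(p := z p + v * of_real t)))
     has_vector_derivative (f z * g' z + f' z * g z)) (at 0)"
  proof
    fix z
    show "((\<lambda>t::real. f (z(p := z p + v * of_real t)) * g (z(p := z p + v * of_real t)))
     has_vector_derivative (f z * g' z + f' z * g z)) (at 0)"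
      using has_vector_derivative_mult[OF f'(2)[rule_format, of z] g'(2)[rule_format, of z]] by simp
  qed
  then show ?case
    using smooth.add[OF smooth.mul[OF mul(1) g'(1)] smooth.mul[OF f'(1) mul(2)]]
    by (rule bexI[where x="\<lambda>z. f z * g' z + f' z * g z"])
next
  case (cmp f m)
  then obtain f' where f': "f' \<in> smooth \<Phi>" "\<forall>z. ((\<lambda>t::real. f (z(p := z p + v * of_real t))) has_vector_derivative f' z) (at 0)"
    by blast
  have "\<forall>z. ((\<lambda>t::real. \<Phi> m (f (z(p := z p + v * of_real t)))) has_vector_derivative (f' z * \<Phi> (Suc m) (f z))) (at 0)"
  proof
    fix z
    show "((\<lambda>t::real. \<Phi> m (f (z(p := z p + v * of_real t)))) has_vector_derivative (f' z * \<Phi> (Suc m) (f z))) (at 0)"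
      using field_vector_diff_chain_at[OF f'(2)[rule_format, of z], of "\<Phi> m" "\<Phi> (Suc m) (f z)"] \<Phi>
      by (simp add: o_def)
  qed
  then show ?case
    using smooth.mul[OF f'(1) smooth.cmp[OF cmp(1)]]
    by (rule bexI[where x="\<lambda>z. f' z * \<Phi> (Suc m) (f z)"])
qed

lemma sum_aux: "((\<Sum>j\<in>J. c j * a j) - \<i> * (\<Sum>j\<in>J. c j * b j)) / 2 = (\<Sum>j\<in>J. c j * ((a j - \<i> * b j) / 2))"
proof -
  have "(\<Sum>j\<in>J. c j * ((a j - \<i> * b j) / 2)) = (\<Sum>j\<in>J. ((c j * a j) - \<i> * (c j * b j)) / 2)"
    by (rule sum.cong) (simp_all add: algebra_simps)
  also have "\<dots> = ((\<Sum>j\<in>J. c j * a j) - (\<Sum>j\<in>J. \<i> * (c j * b j))) / 2"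
    by (simp add: sum_divide_distrib[symmetric] sum_subtractf)
  also have "\<dots> = ((\<Sum>j\<in>J. c j * a j) - \<i> * (\<Sum>j\<in>J. c j * b j)) / 2"
    by (simp add: sum_distrib_left)
  finally show ?thesis by simp
qed

locale phi_der =
  fixes \<Phi> :: "nat \<Rightarrow> complex \<Rightarrow> complex"
  assumes \<Phi>: "\<And>m w. (\<Phi> m has_field_derivative \<Phi> (Suc m) w) (at w)"
begin

lemma vd:
  assumes "f \<in> smooth \<Phi>"
  shows "((\<lambda>t::real. f (z(p := z p + v * of_real t))) has_vector_derivative
     vector_derivative (\<lambda>t::real. f (z(p := z p + v * of_real t))) (at 0)) (at 0)"
proof -
  obtain f' where "f' \<in> smooth \<Phi>" "\<forall>z. ((\<lambda>t::real. f (z(p := z p + v * of_real t))) has_vector_derivative f' z) (at 0)"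
    using smooth_dir[OF \<Phi> assms] by blast
  then show ?thesis using vector_derivative_at by metis
qed

lemma vd_fun:
  assumes "f \<in> smooth \<Phi>"
  shows "\<exists>f'\<in>smooth \<Phi>. \<forall>z. vector_derivative (\<lambda>t::real. f (z(p := z p + v * of_real t))) (at 0) = f' z"
proof -
  obtain f' where "f' \<in> smooth \<Phi>" "\<forall>z. ((\<lambda>t::real. f (z(p := z p + v * of_real t))) has_vector_derivative f' z) (at 0)"
    using smooth_dir[OF \<Phi> assms] by blast
  then show ?thesis using vector_derivative_at by metis
qed

lemma wirt_alt: "wirt p f z = (vector_derivative (\<lambda>t::real. f (z(p := z p + 1 * of_real t))) (at 0)
      - \<i> * vector_derivative (\<lambda>t::real. f (z(p := z p + \<i> * of_real t))) (at 0)) / 2"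
  unfolding wirt_def by simp

lemma wirt_smooth:
  assumes "f \<in> smooth \<Phi>"
  shows "wirt p f \<in> smooth \<Phi>"
proof -
  obtain f1 where f1: "f1 \<in> smooth \<Phi>" "\<forall>z. vector_derivative (\<lambda>t::real. f (z(p := z p + 1 * of_real t))) (at 0) = f1 z"
    using vd_fun[OF assms] by blast
  obtain f2 where f2: "f2 \<in> smooth \<Phi>" "\<forall>z. vector_derivative (\<lambda>t::real. f (z(p := z p + \<i> * of_real t))) (at 0) = f2 z"
    using vd_fun[OF assms] by blast
  have "wirt p f = (\<lambda>z. f1 z * (1/2) + f2 z * (- \<i> / 2))"
  proof
    fix z show "wirt p f z = f1 z * (1/2) + f2 z * (- \<i> / 2)"
      unfolding wirt_alt f1(2)[rule_format] f2(2)[rule_format] by (simp add: field_simps)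
  qed
  moreover have "(\<lambda>z. f1 z * (1/2) + f2 z * (- \<i> / 2)) \<in> smooth \<Phi>"
    by (intro smooth.add smooth.mul f1(1) f2(1) smooth.cst)
  ultimately show ?thesis by simp
qed

lemma vd_lin:
  assumes "finite J" "\<forall>j\<in>J. f j \<in> smooth \<Phi>"
  shows "vector_derivative (\<lambda>t::real. \<Sum>j\<in>J. c j * f j (z(p := z p + v * of_real t))) (at 0) =
     (\<Sum>j\<in>J. c j * vector_derivative (\<lambda>t::real. f j (z(p := z p + v * of_real t))) (at 0))"
proof (rule vector_derivative_at)
  show "((\<lambda>t::real. \<Sum>j\<in>J. c j * f j (z(p := z p + v * of_real t))) has_vector_derivative
     (\<Sum>j\<in>J. c j * vector_derivative (\<lambda>t::real. f j (z(p := z p + v * of_real t))) (at 0))) (at 0)"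
    by (intro has_vector_derivative_sum has_vector_derivative_mult_right vd) (use assms in auto)
qed

lemma wirt_lin:
  assumes "finite J" "\<forall>j\<in>J. f j \<in> smooth \<Phi>"
  shows "wirt p (\<lambda>z. \<Sum>j\<in>J. c j * f j z) = (\<lambda>z. \<Sum>j\<in>J. c j * wirt p (f j) z)"
proof
  fix z
  show "wirt p (\<lambda>z. \<Sum>j\<in>J. c j * f j z) z = (\<Sum>j\<in>J. c j * wirt p (f j) z)"
    unfolding wirt_alt vd_lin[OF assms] by (rule sum_aux)
qed

end

definition lin_on :: "(pt \<Rightarrow> complex) set \<Rightarrow> ((pt \<Rightarrow> complex) \<Rightarrow> (pt \<Rightarrow> complex)) \<Rightarrow> bool" where
  "lin_on C T \<longleftrightarrow> (\<forall>f\<in>C. T f \<in> C) \<and> (\<forall>(J::nat set) c f. finite J \<longrightarrow> (\<forall>j\<in>J. f j \<in> C) \<longrightarrow>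
     T (\<lambda>z. \<Sum>j\<in>J. c j * f j z) = (\<lambda>z. \<Sum>j\<in>J. c j * T (f j) z))"

lemma lin_on_id: "lin_on C (\<lambda>f. f)" by (simp add: lin_on_def)

lemma lin_on_comp:
  assumes "lin_on C T1" "lin_on C T2"
  shows "lin_on C (\<lambda>f. T1 (T2 f))"
  unfolding lin_on_def
proof (intro conjI allI impI ballI)
  fix f assume "f \<in> C" then show "T1 (T2 f) \<in> C" using assms unfolding lin_on_def by blast
next
  fix J :: "nat set" and c f assume J: "finite J" "\<forall>j\<in>J. f j \<in> C"
  have "T2 (\<lambda>z. \<Sum>j\<in>J. c j * f j z) = (\<lambda>z. \<Sum>j\<in>J. c j * T2 (f j) z)"
    using assms(2) J unfolding lin_on_def by blast
  moreover have "\<forall>j\<in>J. T2 (f j) \<in> C" using assms(2) J unfolding lin_on_def by blast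
  ultimately show "T1 (T2 (\<lambda>z. \<Sum>j\<in>J. c j * f j z)) = (\<lambda>z. \<Sum>j\<in>J. c j * T1 (T2 (f j)) z)"
    using assms(1) J unfolding lin_on_def by simp
qed

lemma lin_on_pow: "lin_on C T \<Longrightarrow> lin_on C (T ^^ n)"
proof (induction n)
  case 0 then show ?case by (simp add: lin_on_id[unfolded id_def])
next
  case (Suc n)
  have "lin_on C (\<lambda>f. T ((T ^^ n) f))" by (rule lin_on_comp[OF Suc.prems Suc.IH[OF Suc.prems]])
  then show ?case by (simp add: o_def)
qed

lemma lin_on_foldr:
  assumes "\<And>i. lin_on C (W i)"
  shows "lin_on C (\<lambda>f. foldr (\<lambda>i g. (W i ^^ nv i) g) xs f)"
proof (induction xs)
  case Nil then show ?case by (simp add: lin_on_id)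
next
  case (Cons x xs)
  show ?case using lin_on_comp[OF lin_on_pow[OF assms] Cons.IH] by simp
qed

lemma (in phi_der) lin_wirt: "lin_on (smooth \<Phi>) (wirt p)"
  unfolding lin_on_def using wirt_smooth wirt_lin by blast

lemma (in phi_der) lin_deriv_alpha: "lin_on (smooth \<Phi>) (deriv_alpha d \<alpha> nv)"
proof -
  have "lin_on (smooth \<Phi>) (\<lambda>f. foldr (\<lambda>i g. (wirt (\<alpha>, i) ^^ nv i) g) [1..<d+1] f)"
    by (rule lin_on_foldr) (rule lin_wirt)
  moreover have "deriv_alpha d \<alpha> nv = (\<lambda>f. foldr (\<lambda>i g. (wirt (\<alpha>, i) ^^ nv i) g) [1..<d+1] f)"
    by (intro ext) (simp add: deriv_alpha_def)
  ultimately show ?thesis by simp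
qed

lemma smooth_sum: "finite J \<Longrightarrow> \<forall>j\<in>J. f j \<in> smooth \<Phi> \<Longrightarrow> (\<lambda>z. \<Sum>j\<in>J. f j z) \<in> smooth \<Phi>"
proof (induction J rule: finite_induct)
  case empty then show ?case using smooth.cst[of 0] by simp
next
  case (insert x F)
  then show ?case using smooth.add[of "f x" \<Phi> "\<lambda>z. \<Sum>j\<in>F. f j z"] by simp
qed

lemma smooth_diff: "f \<in> smooth \<Phi> \<Longrightarrow> g \<in> smooth \<Phi> \<Longrightarrow> (\<lambda>z. f z - g z) \<in> smooth \<Phi>"
  using smooth.add[of f \<Phi> "\<lambda>z. (-1) * g z"] smooth.mul[OF smooth.cst[of "-1"], of g] by simp

definition Sq :: "nat \<Rightarrow> nat \<Rightarrow> nat \<Rightarrow> pt \<Rightarrow> complex" where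
  "Sq d a b z = (\<Sum>i\<in>{1..d}. (z (a, i) - z (b, i)) * (cnj (z (a, i)) - cnj (z (b, i))))"

lemma Sq_smooth: "Sq d a b \<in> smooth \<Phi>"
proof -
  have "(\<lambda>z. \<Sum>i\<in>{1..d}. (z (a, i) - z (b, i)) * (cnj (z (a, i)) - cnj (z (b, i)))) \<in> smooth \<Phi>"
    by (intro smooth_sum ballI smooth.mul smooth_diff smooth.crd smooth.cj) simp
  then show ?thesis unfolding Sq_def[abs_def] .
qed

lemma Sq_sqdist: "of_real (sqdist d a b z) = Sq d a b z"
  unfolding sqdist_def Sq_def of_real_sum complex_norm_square by simp

definition PhiK :: "real \<Rightarrow> nat \<Rightarrow> complex \<Rightarrow> complex" where
  "PhiK e m w = (-1 / (4 * of_real e)) ^ m * exp (- w / (4 * of_real e))"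

lemma PhiK_der: "0 < e \<Longrightarrow> (PhiK e m has_field_derivative PhiK e (Suc m) w) (at w)"
  unfolding PhiK_def[abs_def]
  by (auto intro!: derivative_eq_intros simp: field_simps)

lemma Kan_coeff:
  "inverse ((2 * of_real pi * \<i> * of_real t) ^ d) * exp (- of_real (sqdist d a b z / (4 * t))) =
   inverse ((2 * of_real pi * \<i> * of_real t) ^ d) * PhiK t 0 (Sq d a b z)"
  unfolding PhiK_def Sq_sqdist[symmetric] by simp

definition PhiP :: "nat \<Rightarrow> real \<Rightarrow> real \<Rightarrow> nat \<Rightarrow> complex \<Rightarrow> complex" where
  "PhiP d e L m w = integral {e..L} (\<lambda>t. inverse ((2 * of_real pi * \<i> * of_real t) ^ d) / (4 * of_real t)
      * (-1 / (4 * of_real t)) ^ m * exp (- w / (4 * of_real t)))"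

lemma PhiP_der:
  assumes "0 < e"
  shows "(PhiP d e L m has_field_derivative PhiP d e L (Suc m) w) (at w)"
proof -
  let ?f = "\<lambda>m w t. inverse ((2 * of_real pi * \<i> * of_real t) ^ d) / (4 * of_real t)
      * (-1 / (4 * of_real t)) ^ m * exp (- w / (4 * of_real t)) :: complex"
  have cont: "continuous_on (UNIV \<times> {e..L}) (\<lambda>(w, t). ?f m w t)" for m
  proof -
    have "continuous_on (UNIV \<times> {e..L}) (\<lambda>x. ?f m (fst x) (snd x))"
      using assms by (intro continuous_intros) auto
    then show ?thesis by (simp add: case_prod_beta)
  qed
  have "((\<lambda>w. integral (cbox e L) (?f m w)) has_field_derivative integral (cbox e L) (?f (Suc m) w)) (at w within UNIV)"
  proof (rule leibniz_rule_field_derivative)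
    fix w t assume "t \<in> cbox e L"
    then have "t \<noteq> 0" using assms by auto
    then show "((\<lambda>w. ?f m w t) has_field_derivative ?f (Suc m) w t) (at w within UNIV)"
      by (auto intro!: derivative_eq_intros simp: field_simps)
  next
    fix w
    have "continuous_on {e..L} (?f m w)"
      using assms by (intro continuous_intros) auto
    then show "?f m w integrable_on cbox e L" by (simp add: integrable_continuous_interval)
  next
    show "continuous_on (UNIV \<times> cbox e L) (\<lambda>(w, t). ?f (Suc m) w t)" using cont[of "Suc m"] by (simp only: cbox_interval)
  qed auto
  then show ?thesis unfolding PhiP_def[abs_def] by simp
qed

lemma Pan_coeff:
  assumes "0 < e"
  shows "integral {e..L} (\<lambda>t::real. inverse ((2 * of_real pi * \<i> * of_real t) ^ d)
          * ((cnj (z (a, j)) - cnj (z (b, j))) / (4 * of_real t))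
          * exp (- of_real (sqdist d a b z / (4 * t)))) =
    (cnj (z (a, j)) - cnj (z (b, j))) * PhiP d e L 0 (Sq d a b z)"
  unfolding PhiP_def integral_mult_right[symmetric]
proof (rule integral_cong)
  fix t assume "t \<in> {e..L}"
  then have "t \<noteq> 0" using assms by auto
  then show "inverse ((2 * of_real pi * \<i> * of_real t) ^ d)
          * ((cnj (z (a, j)) - cnj (z (b, j))) / (4 * of_real t))
          * exp (- of_real (sqdist d a b z / (4 * t))) =
      (cnj (z (a, j)) - cnj (z (b, j))) * (inverse ((2 * of_real pi * \<i> * of_real t) ^ d) / (4 * of_real t)
      * (-1 / (4 * of_real t)) ^ 0 * exp (- Sq d a b z / (4 * of_real t)))"
    unfolding Sq_sqdist[symmetric] by simp
qed

lemma dz_const: "dzbar_diff a b x A z = dzbar_diff a b x A z'"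
  by (simp add: dzbar_diff_def dzbar_def)

lemma wl_const: "wedge_list (map (dzbar_diff a b) xs) S z = wedge_list (map (dzbar_diff a b) xs) S z'"
proof (induction xs arbitrary: S)
  case Nil then show ?case by (simp add: scal_form_def)
next
  case (Cons x xs)
  show ?case unfolding list.map wedge_list.simps wedge_def
    by (intro if_cong refl sum.cong arg_cong2[where f="(*)"]) (simp_all only: dz_const Cons.IH)
qed

definition wlc where "wlc a b xs S = wedge_list (map (dzbar_diff a b) xs) S (\<lambda>_. 0)"

lemma wl_c: "wedge_list (map (dzbar_diff a b) xs) S z = wlc a b xs S"
  unfolding wlc_def by (rule wl_const)

lemma lin_apply:
  fixes J :: "nat set"
  assumes "lin_on C T" "finite J" "\<forall>j\<in>J. f j \<in> C"
  shows "T (\<lambda>z. \<Sum>j\<in>J. c j * f j z) = (\<lambda>z. \<Sum>j\<in>J. c j * T (f j) z)"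
proof -
  have "\<forall>(J::nat set) c f. finite J \<longrightarrow> (\<forall>j\<in>J. f j \<in> C) \<longrightarrow>
     T (\<lambda>z. \<Sum>j\<in>J. c j * f j z) = (\<lambda>z. \<Sum>j\<in>J. c j * T (f j) z)"
    using assms(1) unfolding lin_on_def by (rule conjunct2)
  then show ?thesis using assms(2,3) by blast
qed

theorem mainTheorem5:
  fixes d k :: nat and n :: "nat \<Rightarrow> nat \<Rightarrow> nat" and \<epsilon> L :: real
  assumes "1 \<le> d" and "1 \<le> k" and "k \<le> d" and "0 < \<epsilon>" and "\<epsilon> < L"
  shows "(\<forall>S z. W_form d k \<epsilon> L n S z = 0) \<and> (\<forall>\<Phi>. modified_weight d k \<epsilon> L n \<Phi> = 0)"
proof -
  note eps = assms(4)
  interpret K: phi_der "PhiK \<epsilon>" by unfold_locales (rule PhiK_der[OF eps])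
  interpret P: phi_der "PhiP d \<epsilon> L" by unfold_locales (rule PhiP_der[OF eps])
  define c0 where "c0 = inverse ((2 * of_real pi * \<i> * of_real \<epsilon>) ^ d)"
  define KF where "KF z = c0 * PhiK \<epsilon> 0 (Sq d 1 k z)" for z
  define LK where "LK = map (dzbar_diff 1 k) [1..<d+1]"
  have KFs: "KF \<in> smooth (PhiK \<epsilon>)"
    unfolding KF_def[abs_def] by (intro smooth.mul smooth.cst smooth.cmp Sq_smooth)
  define z0 :: pt where "z0 = (\<lambda>_. 0)"
  have DK: "form_deriv d k (n k) (Kan d \<epsilon> 1 k) =
      (\<lambda>S z. deriv_alpha d k (n k) KF z * wedge_list LK S z)"
  proof (intro ext)
    fix S z
    have e: "Kan d \<epsilon> 1 k S = (\<lambda>z. \<Sum>j\<in>{0::nat}. wlc 1 k [1..<d+1] S * (\<lambda>_. KF) j z)"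
      unfolding Kan_def smul_form_def KF_def c0_def LK_def Kan_coeff wl_c
      by (intro ext) (simp del: upt_Suc add: mult.commute)
    have "deriv_alpha d k (n k) (\<lambda>z. \<Sum>j\<in>{0::nat}. wlc 1 k [1..<d+1] S * (\<lambda>_. KF) j z) =
       (\<lambda>z. \<Sum>j\<in>{0::nat}. wlc 1 k [1..<d+1] S * deriv_alpha d k (n k) ((\<lambda>_. KF) j) z)"
      by (rule lin_apply[OF K.lin_deriv_alpha]) (use KFs in auto)
    then show "form_deriv d k (n k) (Kan d \<epsilon> 1 k) S z = deriv_alpha d k (n k) KF z * wedge_list LK S z"
      unfolding form_deriv_def e LK_def wl_c by (simp del: upt_Suc add: mult.commute)
  qed
  define H where "H \<alpha> j z = (cnj (z (\<alpha>, j)) - cnj (z (\<alpha> + 1, j))) * PhiP d \<epsilon> L 0 (Sq d \<alpha> (\<alpha> + 1) z)" for \<alpha> j z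
  have Hs: "H \<alpha> j \<in> smooth (PhiP d \<epsilon> L)" for \<alpha> j
    unfolding H_def[abs_def] by (intro smooth.mul smooth_diff smooth.cj smooth.cmp Sq_smooth)
  define WL where "WL \<alpha> j = map (dzbar_diff \<alpha> (\<alpha> + 1)) (filter (\<lambda>i. i \<noteq> j) [1..<d+1])" for \<alpha> j
  define DP where "DP \<alpha> = form_deriv d \<alpha> (n \<alpha>) (Pan d \<epsilon> L \<alpha> (\<alpha> + 1))" for \<alpha>
  define cP where "cP \<alpha> j z = (-1) ^ (j - 1) * deriv_alpha d \<alpha> (n \<alpha>) (H \<alpha> j) z" for \<alpha> j z
  have DPe: "DP \<alpha> = (\<lambda>S z. \<Sum>j\<in>{1..d}. cP \<alpha> j z *
      wedge_list (map (dzbar_diff \<alpha> (\<alpha> + 1)) (filter (\<lambda>i. i \<noteq> j) [1..<d+1])) S z)" for \<alpha>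
  proof (intro ext)
    fix S z
    have e: "Pan d \<epsilon> L \<alpha> (\<alpha> + 1) S = (\<lambda>z. \<Sum>j\<in>{1..d}. ((-1) ^ (j - 1) * wlc \<alpha> (\<alpha>+1) (filter (\<lambda>i. i \<noteq> j) [1..<d+1]) S) * H \<alpha> j z)"
      unfolding Pan_def H_def Pan_coeff[OF eps] wl_c
      by (intro ext sum.cong refl) (simp del: upt_Suc add: mult_ac)
    have "deriv_alpha d \<alpha> (n \<alpha>) (\<lambda>z. \<Sum>j\<in>{1..d}. ((-1) ^ (j - 1) * wlc \<alpha> (\<alpha>+1) (filter (\<lambda>i. i \<noteq> j) [1..<d+1]) S) * H \<alpha> j z) =
        (\<lambda>z. \<Sum>j\<in>{1..d}. ((-1) ^ (j - 1) * wlc \<alpha> (\<alpha>+1) (filter (\<lambda>i. i \<noteq> j) [1..<d+1]) S) * deriv_alpha d \<alpha> (n \<alpha>) (H \<alpha> j) z)"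
      by (rule lin_apply[OF P.lin_deriv_alpha]) (use Hs in auto)
    then show "DP \<alpha> S z = (\<Sum>j\<in>{1..d}. cP \<alpha> j z *
      wedge_list (map (dzbar_diff \<alpha> (\<alpha> + 1)) (filter (\<lambda>i. i \<noteq> j) [1..<d+1])) S z)"
      unfolding DP_def form_deriv_def cP_def e wl_c
      by (simp del: upt_Suc add: mult_ac)
  qed
  have W0: "W_form d k \<epsilon> L n S z = 0" for S z
  proof (cases "finite S")
    case False then show ?thesis unfolding W_form_def by (rule wedge_infinite)
  next
    case fin: True
    let ?R = "wedge_list (map DP [1..<k])"
    have "W_form d k \<epsilon> L n S z = wedge (\<lambda>S z. deriv_alpha d k (n k) KF z * wedge_list LK S z) ?R S z"
      unfolding W_form_def DK DP_def ..
    also have "\<dots> = deriv_alpha d k (n k) KF z * wedge (wedge_list LK) ?R S z"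
      by (rule wedge_smul1)
    finally have A: "W_form d k \<epsilon> L n S z = deriv_alpha d k (n k) KF z * wedge (wedge_list LK) ?R S z" .
    have oLK: "\<forall>x\<in>set LK. onef x" unfolding LK_def by (auto simp only: set_map onef_dzbar_diff)
    have "wedge (wedge_list LK) ?R S z = foldr wedge LK ?R S z"
      by (rule wedge_list_assoc[OF oLK fin])
    also have "\<dots> = foldr wedge (LK @ []) ?R S z" by (simp only: append_Nil2)
    also have "\<dots> = 0"
      unfolding LK_def
      by (rule claim[OF DPe, of k 1 "k - 1" "{1..d}"]) (use assms fin in auto)
    finally show ?thesis using A by simp
  qed
  moreover have "modified_weight d k \<epsilon> L n \<Phi> = 0" for \<Phi>
  proof -
    have "W_form d k \<epsilon> L n = (\<lambda>S z. 0)" using W0 by (intro ext)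
    moreover have "(\<lambda>z. wedge \<Phi> (\<lambda>S z. 0) (index_set d k) z) = (\<lambda>z. 0)"
      by (intro ext) (simp add: wedge_def)
    ultimately show ?thesis unfolding modified_weight_def by simp
  qed
  ultimately show ?thesis by blast
qed

end
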